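(* In HotStuff with $n$ validators, if there is a safety violation (COMMIT quorum certificates exist for two conflicting blocks), then one can identify at least $n/3$ validators each of which has violated one of the HotStuff slashing conditions.
   Context: HotStuff: execution proceeds in views, each with a leader. Votes carry a block, a view number and a type among PREPARE, PRE-COMMIT, COMMIT. A quorum certificate (QC) is a collection of at least $2n/3$ votes of the same type, view and block. In each view the leader proposes a block justified by the highest PREPARE QC it knows; validators vote PREPARE for the proposal only if it is safe (the safeNode rule: it extends the block the validator is locked on, or its justifying PREPARE QC has a higher view than the lock); given a PREPARE QC the validators vote PRE-COMMIT, and upon a PRE-COMMIT QC for a block a validator locks on it and votes COMMIT; a block is decided once it has a COMMIT QC. HotStuff slashing conditions: a validator violates a slashing condition if (1) it votes more than once for the same type and the same view, or (2) it votes COMMIT for a block $B_1$ in view $v_1$ and later votes PREPARE for a block $B_2$ conflicting with $B_1$ in a view $v_2>v_1$, unless there has been a PREPARE QC for a block conflicting with $B_1$ in some view $v$ with $v_1<v<v_2$. *)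

theory Defs
  imports Main
begin

datatype vtype = Prepare | PreCommit | Commit

definition extends :: "('b \<Rightarrow> 'b option) \<Rightarrow> 'b \<Rightarrow> 'b \<Rightarrow> bool" where
  "extends parent b a \<longleftrightarrow> (b, a) \<in> {(x, y). parent x = Some y}\<^sup>*"

definition conflicting :: "('b \<Rightarrow> 'b option) \<Rightarrow> 'b \<Rightarrow> 'b \<Rightarrow> bool" where
  "conflicting parent b1 b2 \<longleftrightarrow> \<not> extends parent b1 b2 \<and> \<not> extends parent b2 b1"

text \<open>A vote is a tuple (validator, type, view, block); Votes is the set of all
  votes ever cast.\<close>
type_synonym ('v, 'b) vote = "'v \<times> vtype \<times> nat \<times> 'b"

definition is_qc :: "'v set \<Rightarrow> ('v, 'b) vote set \<Rightarrow> vtype \<Rightarrow> nat \<Rightarrow> 'b \<Rightarrow> 'v set \<Rightarrow> bool" where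
  "is_qc V Votes t w b Q \<longleftrightarrow> Q \<subseteq> V \<and> 3 * card Q \<ge> 2 * card V \<and> (\<forall>x\<in>Q. (x, t, w, b) \<in> Votes)"

definition has_qc :: "'v set \<Rightarrow> ('v, 'b) vote set \<Rightarrow> vtype \<Rightarrow> nat \<Rightarrow> 'b \<Rightarrow> bool" where
  "has_qc V Votes t w b \<longleftrightarrow> (\<exists>Q. is_qc V Votes t w b Q)"

definition valid_votes :: "'v set \<Rightarrow> ('v, 'b) vote set \<Rightarrow> bool" where
  "valid_votes V Votes \<longleftrightarrow>
     (\<forall>x w b. (x, PreCommit, w, b) \<in> Votes \<longrightarrow> has_qc V Votes Prepare w b) \<and>
     (\<forall>x w b. (x, Commit, w, b) \<in> Votes \<longrightarrow> has_qc V Votes PreCommit w b)"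

definition slash1 :: "('v, 'b) vote set \<Rightarrow> 'v \<Rightarrow> bool" where
  "slash1 Votes x \<longleftrightarrow> (\<exists>t w b b'. b \<noteq> b' \<and> (x, t, w, b) \<in> Votes \<and> (x, t, w, b') \<in> Votes)"

definition slash2 :: "('b \<Rightarrow> 'b option) \<Rightarrow> 'v set \<Rightarrow> ('v, 'b) vote set \<Rightarrow> 'v \<Rightarrow> bool" where
  "slash2 parent V Votes x \<longleftrightarrow>
     (\<exists>b1 w1 b2 w2. (x, Commit, w1, b1) \<in> Votes \<and> (x, Prepare, w2, b2) \<in> Votes \<and>
        w1 < w2 \<and> conflicting parent b1 b2 \<and>
        \<not> (\<exists>w b. w1 < w \<and> w < w2 \<and> conflicting parent b1 b \<and> has_qc V Votes Prepare w b))"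

definition violates :: "('b \<Rightarrow> 'b option) \<Rightarrow> 'v set \<Rightarrow> ('v, 'b) vote set \<Rightarrow> 'v \<Rightarrow> bool" where
  "violates parent V Votes x \<longleftrightarrow> slash1 Votes x \<or> slash2 parent V Votes x"

end

theory Submission
  imports Defs
begin

lemma qi:
  assumes "finite V" "Q1 \<subseteq> V" "Q2 \<subseteq> V" "3 * card Q1 \<ge> 2 * card V" "3 * card Q2 \<ge> 2 * card V"
  shows "3 * card (Q1 \<inter> Q2) \<ge> card V"
proof -
  have f1: "finite Q1" "finite Q2" using assms finite_subset by auto
  have "card (Q1 \<union> Q2) + card (Q1 \<inter> Q2) = card Q1 + card Q2"
    using card_Un_Int[OF f1] by simp
  moreover have "card (Q1 \<union> Q2) \<le> card V" using assms by (intro card_mono) auto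
  ultimately show ?thesis using assms by linarith
qed

lemma conf_sym: "conflicting parent a b \<Longrightarrow> conflicting parent b a"
  unfolding conflicting_def by auto

lemma conf_neq: "conflicting parent a b \<Longrightarrow> a \<noteq> b"
  unfolding conflicting_def extends_def by auto

lemma step:
  assumes fin: "finite V" and h: "has_qc V Votes t w b"
    and imp: "\<And>x. (x, t, w, b) \<in> Votes \<Longrightarrow> has_qc V Votes t' w b"
  shows "has_qc V Votes t' w b"
proof -
  obtain Q where Q: "is_qc V Votes t w b Q" using h has_qc_def by metis
  show ?thesis
  proof (cases "Q = {}")
    case True
    then have "card V = 0" using Q unfolding is_qc_def by simp
    then have "V = {}" using fin by simp
    then show ?thesis unfolding has_qc_def is_qc_def by auto
  next
    case False
    then obtain x where "x \<in> Q" by blast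
    then show ?thesis using imp Q unfolding is_qc_def by blast
  qed
qed

lemma main:
  fixes parent :: "'b \<Rightarrow> 'b option"
    and V :: "'v set"
    and Votes :: "('v, 'b) vote set"
  assumes fin: "finite V"
    and vv: "valid_votes V Votes"
    and c1: "has_qc V Votes Commit w1 b1"
    and c2: "has_qc V Votes Commit w2 b2"
    and cf: "conflicting parent b1 b2"
    and le: "w1 \<le> w2"
  shows "\<exists>S \<subseteq> V. 3 * card S \<ge> card V \<and> (\<forall>x\<in>S. violates parent V Votes x)"
proof -
  obtain Q1 where Q1: "is_qc V Votes Commit w1 b1 Q1" using c1 has_qc_def by metis
  obtain Q2 where Q2: "is_qc V Votes Commit w2 b2 Q2" using c2 has_qc_def by metis
  show ?thesis
  proof (cases "w1 = w2")
    case True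
    have "3 * card (Q1 \<inter> Q2) \<ge> card V"
      using Q1 Q2 unfolding is_qc_def by (intro qi[OF fin]) auto
    moreover have "\<forall>x\<in>Q1 \<inter> Q2. violates parent V Votes x"
    proof
      fix x assume x: "x \<in> Q1 \<inter> Q2"
      have "(x, Commit, w1, b1) \<in> Votes" "(x, Commit, w1, b2) \<in> Votes"
        using x Q1 Q2 True unfolding is_qc_def by auto
      then have "slash1 Votes x" unfolding slash1_def using conf_neq[OF cf] by blast
      then show "violates parent V Votes x" unfolding violates_def by simp
    qed
    moreover have "Q1 \<inter> Q2 \<subseteq> V" using Q1 unfolding is_qc_def by auto
    ultimately show ?thesis by (intro exI[of _ "Q1 \<inter> Q2"]) simp
  next
    case False
    hence lt: "w1 < w2" using le by simp
    define P where "P = (\<lambda>w. w1 < w \<and> w \<le> w2 \<and> (\<exists>b. conflicting parent b1 b \<and> has_qc V Votes Prepare w b))"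
    have "has_qc V Votes PreCommit w2 b2"
      by (rule step[OF fin c2]) (use vv in \<open>simp add: valid_votes_def\<close>)
    hence "has_qc V Votes Prepare w2 b2"
      by (rule step[OF fin]) (use vv in \<open>simp add: valid_votes_def\<close>)
    hence "P w2" unfolding P_def using lt cf by auto
    define w where "w = (LEAST w. P w)"
    have Pw: "P w" unfolding w_def by (rule LeastI[of P, OF \<open>P w2\<close>])
    have minw: "\<And>u. u < w \<Longrightarrow> \<not> P u" unfolding w_def by (rule not_less_Least)
    obtain b Qp where b: "conflicting parent b1 b" and Qp: "is_qc V Votes Prepare w b Qp"
      and ww: "w1 < w" "w \<le> w2"
      using Pw unfolding P_def has_qc_def by blast
    have "3 * card (Q1 \<inter> Qp) \<ge> card V"
      using Q1 Qp unfolding is_qc_def by (intro qi[OF fin]) auto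
    moreover have "\<forall>x\<in>Q1 \<inter> Qp. violates parent V Votes x"
    proof
      fix x assume x: "x \<in> Q1 \<inter> Qp"
      have nq: "\<not> (\<exists>u c. w1 < u \<and> u < w \<and> conflicting parent b1 c \<and> has_qc V Votes Prepare u c)"
      proof
        assume "\<exists>u c. w1 < u \<and> u < w \<and> conflicting parent b1 c \<and> has_qc V Votes Prepare u c"
        then obtain u c where "w1 < u" "u < w" "conflicting parent b1 c" "has_qc V Votes Prepare u c" by blast
        moreover have "u \<le> w2" using \<open>u < w\<close> ww by simp
        ultimately have "P u" unfolding P_def by blast
        then show False using minw \<open>u < w\<close> by blast
      qed
      then have "slash2 parent V Votes x"
      proof -
        have "(x, Commit, w1, b1) \<in> Votes" "(x, Prepare, w, b) \<in> Votes"
          using x Q1 Qp unfolding is_qc_def by auto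
        then show ?thesis unfolding slash2_def using ww b nq by blast
      qed
      then show "violates parent V Votes x" unfolding violates_def by blast
    qed
    moreover have "Q1 \<inter> Qp \<subseteq> V" using Q1 unfolding is_qc_def by auto
    ultimately show ?thesis by (intro exI[of _ "Q1 \<inter> Qp"]) simp
  qed
qed

theorem lemma3:
  fixes parent :: "'b \<Rightarrow> 'b option"
    and V :: "'v set"
    and Votes :: "('v, 'b) vote set"
  assumes "finite V"
    and "valid_votes V Votes"
    and "has_qc V Votes Commit w1 b1"
    and "has_qc V Votes Commit w2 b2"
    and "conflicting parent b1 b2"
  shows "\<exists>S \<subseteq> V. 3 * card S \<ge> card V \<and> (\<forall>x\<in>S. violates parent V Votes x)"
proof (cases "w1 \<le> w2")
  case True
  then show ?thesis using main[OF assms] by simp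
next
  case False
  then show ?thesis using main[OF assms(1,2,4,3) conf_sym[OF assms(5)]] by simp
qed

end
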